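(* Let $Q$ be a quantale, $S$ a sup-lattice, and $r:Q\to\mathcal{Q}(S)$ a representation of $Q$ on $S$; write $x\cdot a=r(a)(x)$ for $x\in S$, $a\in Q$. Then: (1) the representation is irreducible if and only if, for all $x\in S$, the condition $x\cdot 1_Q\le x$ implies $x=0_S$ or $x=1_S$; (2) if the representation is strong, then it is irreducible; (3) if $Q$ is unital and the representation is pre-unital, then it is irreducible if and only if it is strong.
   Context: A sup-lattice is a complete lattice; a sup-lattice homomorphism preserves arbitrary joins. A quantale is a sup-lattice $Q$ with an associative multiplication $\cdot$ distributing over arbitrary joins in each variable; $0$ and $1$ (or $1_Q$) denote its bottom and top. $Q$ is unital if it has an element $e$ with $e\cdot a=a=a\cdot e$ for all $a$. A quantale homomorphism is a join-preserving map preserving multiplication. For a sup-lattice $S$, $\mathcal{Q}(S)$ is the unital quantale of all sup-lattice endomorphisms of $S$, with pointwise joins, multiplication $f\cdot g=g\circ f$, and unit $\mathrm{id}_S$. A representation of $Q$ on $S$ is a quantale homomorphism $r:Q\to\mathcal{Q}(S)$. It is irreducible if the only principal ideals $I={\downarrow}x\subseteq S$ with $I\cdot Q\subseteq I$ are $\{0_S\}$ and $S$. It is strong if $r(1_Q)$ is the top of $\mathcal{Q}(S)$ (equivalently $x\cdot 1_Q=1_S$ for all $x\neq 0_S$). For unital $Q$, it is pre-unital if $\mathrm{id}_S\le r(e)$. *)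

theory Defs
  imports Main
begin

text \<open>Sup-lattices are complete lattices (type class complete_lattice).
  A sup-lattice homomorphism preserves arbitrary joins.\<close>
definition sup_hom :: "('a::complete_lattice \<Rightarrow> 'b::complete_lattice) \<Rightarrow> bool" where
  "sup_hom f \<longleftrightarrow> (\<forall>A. f (Sup A) = Sup (f ` A))"

definition quantale :: "('q::complete_lattice \<Rightarrow> 'q \<Rightarrow> 'q) \<Rightarrow> bool" where
  "quantale m \<longleftrightarrow>
     (\<forall>a b c. m (m a b) c = m a (m b c)) \<and>
     (\<forall>a A. m a (Sup A) = Sup (m a ` A)) \<and>
     (\<forall>a A. m (Sup A) a = Sup ((\<lambda>b. m b a) ` A))"

definition unit_of :: "('q \<Rightarrow> 'q \<Rightarrow> 'q) \<Rightarrow> 'q \<Rightarrow> bool" where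
  "unit_of m e \<longleftrightarrow> (\<forall>a. m e a = a \<and> m a e = a)"

text \<open>Representation r : Q \<rightarrow> Q(S).  Q(S) is the set of sup-lattice
  endomorphisms of S with pointwise joins and multiplication f\<cdot>g = g \<circ> f.
  We write x\<cdot>a = r a x.\<close>
definition representation ::
  "('q::complete_lattice \<Rightarrow> 'q \<Rightarrow> 'q) \<Rightarrow> ('q \<Rightarrow> 's::complete_lattice \<Rightarrow> 's) \<Rightarrow> bool" where
  "representation m r \<longleftrightarrow>
     (\<forall>a. sup_hom (r a)) \<and>
     (\<forall>A. r (Sup A) = Sup (r ` A)) \<and>
     (\<forall>a b. r (m a b) = r b \<circ> r a)"

definition irreducible_rep :: "('q \<Rightarrow> 's::complete_lattice \<Rightarrow> 's) \<Rightarrow> bool" where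
  "irreducible_rep r \<longleftrightarrow>
     (\<forall>x::'s. (\<forall>y a. y \<in> {z. z \<le> x} \<longrightarrow> r a y \<in> {z. z \<le> x})
        \<longrightarrow> {z. z \<le> x} = {bot} \<or> {z. z \<le> x} = UNIV)"

text \<open>Strong: r(1_Q) is the top element of Q(S).\<close>
definition strong_rep :: "('q::complete_lattice \<Rightarrow> 's::complete_lattice \<Rightarrow> 's) \<Rightarrow> bool" where
  "strong_rep r \<longleftrightarrow> sup_hom (r top) \<and> (\<forall>f::'s \<Rightarrow> 's. sup_hom f \<longrightarrow> f \<le> r top)"

definition pre_unital_rep :: "('q \<Rightarrow> 's::complete_lattice \<Rightarrow> 's) \<Rightarrow> 'q \<Rightarrow> bool" where
  "pre_unital_rep r e \<longleftrightarrow> id \<le> r e"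

end

theory Submission
  imports Defs
begin

lemma sup_hom_mono: assumes "sup_hom f" "y \<le> x" shows "f y \<le> f x"
proof -
  have "f x = f (Sup {y, x})" using assms(2) by (simp add: sup_absorb2)
  also have "\<dots> = Sup (f ` {y, x})" using assms(1) unfolding sup_hom_def by (rule spec)
  also have "\<dots> = sup (f y) (f x)" by simp
  finally show ?thesis by (metis sup.cobounded1)
qed

lemma sup_hom_bot: assumes "sup_hom f" shows "f bot = bot"
  using assms unfolding sup_hom_def by (metis Sup_empty image_empty)

lemma rep_mono: assumes "representation m r" "a \<le> b" shows "r a y \<le> r b y"
proof -
  have "r b = r (Sup {a, b})" using assms(2) by (simp add: sup_absorb2)
  also have "\<dots> = Sup (r ` {a, b})" using assms(1) unfolding representation_def by (simp only:)
  also have "\<dots> = sup (r a) (r b)" by simp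
  finally have "r a \<le> r b" by (metis sup.cobounded1)
  then show ?thesis by (simp add: le_fun_def)
qed

theorem proposition2p9:
  fixes m :: "'q::complete_lattice \<Rightarrow> 'q \<Rightarrow> 'q"
    and r :: "'q \<Rightarrow> 's::complete_lattice \<Rightarrow> 's"
  assumes "quantale m" and "representation m r"
  shows "(irreducible_rep r \<longleftrightarrow> (\<forall>x::'s. r top x \<le> x \<longrightarrow> x = bot \<or> x = top))
    \<and> (strong_rep r \<longrightarrow> irreducible_rep r)
    \<and> (\<forall>e. unit_of m e \<longrightarrow> pre_unital_rep r e \<longrightarrow> (irreducible_rep r \<longleftrightarrow> strong_rep r))"
proof -
  have sh: "\<And>a. sup_hom (r a)" using assms(2) unfolding representation_def by simp
  have comp: "\<And>a b. r (m a b) = r b \<circ> r a" using assms(2) unfolding representation_def by simp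
  have ideal: "(\<forall>y a. y \<in> {z. z \<le> x} \<longrightarrow> r a y \<in> {z. z \<le> x}) \<longleftrightarrow> r top x \<le> x" for x
  proof
    assume "\<forall>y a. y \<in> {z. z \<le> x} \<longrightarrow> r a y \<in> {z. z \<le> x}"
    then show "r top x \<le> x" by simp
  next
    assume h: "r top x \<le> x"
    { fix y a assume "y \<le> x"
      have "r a y \<le> r top y" using rep_mono[OF assms(2)] by simp
      also have "\<dots> \<le> r top x" using sup_hom_mono[OF sh \<open>y \<le> x\<close>] .
      finally have "r a y \<le> x" using h by simp }
    then show "\<forall>y a. y \<in> {z. z \<le> x} \<longrightarrow> r a y \<in> {z. z \<le> x}" by simp
  qed
  have bo: "{z. z \<le> x} = {bot} \<longleftrightarrow> x = bot" for x :: 's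
    by (auto simp: bot_unique)
  have to: "{z. z \<le> x} = UNIV \<longleftrightarrow> x = top" for x :: 's
    proof
    assume "{z. z \<le> x} = UNIV" then have "top \<le> x" by blast
    then show "x = top" by (rule top_le)
  qed auto
  have P1: "irreducible_rep r \<longleftrightarrow> (\<forall>x::'s. r top x \<le> x \<longrightarrow> x = bot \<or> x = top)"
    unfolding irreducible_rep_def using ideal bo to by simp
  have P2: "strong_rep r \<longrightarrow> irreducible_rep r"
  proof
    assume s: "strong_rep r"
    define f :: "'s \<Rightarrow> 's" where "f = (\<lambda>y. if y = bot then bot else top)"
    have "sup_hom f" unfolding sup_hom_def f_def
    proof
      fix A :: "'s set"
      show "(if Sup A = bot then bot else (top::'s)) = Sup ((\<lambda>y. if y = bot then bot else (top::'s)) ` A)"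
      proof (cases "Sup A = bot")
        case True
        then have "\<forall>y\<in>A. y = bot" by (simp add: Sup_bot_conv)
        then have "Sup ((\<lambda>y. if y = bot then bot else (top::'s)) ` A) = (bot::'s)" by (simp add: SUP_bot_conv)
        then show ?thesis by (subst if_P[OF True]) (rule sym, assumption)
      next
        case False
        then obtain y where "y \<in> A" "y \<noteq> bot" by (auto simp: Sup_bot_conv)
        then have "top = (\<lambda>y. if y = bot then bot else (top::'s)) y" by simp
        then have "top \<in> (\<lambda>y. if y = bot then bot else (top::'s)) ` A" using \<open>y \<in> A\<close> by (rule image_eqI)
        then have "top \<le> Sup ((\<lambda>y. if y = bot then bot else (top::'s)) ` A)" by (rule Sup_upper)
        then have "Sup ((\<lambda>y. if y = bot then bot else (top::'s)) ` A) = top" by (rule top_le)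
        then show ?thesis by (subst if_not_P[OF False]) (rule sym, assumption)
      qed
    qed
    then have fle: "f \<le> r top" using s unfolding strong_rep_def by blast
    show "irreducible_rep r" unfolding P1
    proof (intro allI impI)
      fix x assume h: "r top x \<le> x"
      show "x = bot \<or> x = top"
      proof (cases "x = bot")
        case False
        have "f x \<le> r top x" using fle by (simp add: le_fun_def)
        then have "top \<le> r top x" using False by (simp add: f_def)
        then show ?thesis using h by (simp add: top_unique)
      qed simp
    qed
  qed
  have P3: "\<forall>e. unit_of m e \<longrightarrow> pre_unital_rep r e \<longrightarrow> (irreducible_rep r \<longleftrightarrow> strong_rep r)"
  proof (intro allI impI iffI)
    fix e assume u: "unit_of m e" and pu: "pre_unital_rep r e" and irr: "irreducible_rep r"
    have key: "r top y = top" if "y \<noteq> bot" for y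
    proof -
      let ?x = "r top y"
      have "r top ?x = r (m top top) y" by (simp add: comp)
      also have "\<dots> \<le> ?x" using rep_mono[OF assms(2)] by simp
      finally have le: "r top ?x \<le> ?x" .
      have d: "?x = bot \<or> ?x = top" proof -
        have "\<forall>x::'s. r top x \<le> x \<longrightarrow> x = bot \<or> x = top" using P1 irr by (rule iffD1)
        then show ?thesis using le by blast
      qed
      have a1: "y \<le> r e y" using pu unfolding pre_unital_rep_def le_fun_def by simp
      have a2: "r e y \<le> ?x" using rep_mono[OF assms(2)] by simp
      have "y \<le> ?x" using a1 a2 by (rule order_trans)
      then have "?x \<noteq> bot" using that by (metis bot_unique)
      then show ?thesis using d by blast
    qed
    show "strong_rep r" unfolding strong_rep_def
    proof (intro conjI allI impI sh)
      fix f :: "'s \<Rightarrow> 's" assume "sup_hom f"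
      show "f \<le> r top" unfolding le_fun_def
      proof
        fix y show "f y \<le> r top y"
        proof (cases "y = bot")
          case True then show ?thesis using sup_hom_bot[OF \<open>sup_hom f\<close>] by simp
        next
          case False then show ?thesis using key[OF False] by simp
        qed
      qed
    qed
  next
    fix e assume "strong_rep r" then show "irreducible_rep r" using P2 by blast
  qed
  show ?thesis using P1 P2 P3 by blast
qed

end
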